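(* Let $X_\Sigma$ be a projective toric variety and $D$ an $\mathbf R$-ample divisor on $X_\Sigma$. For each primitive collection $C$ let $\lambda_C\in\Lambda^D$ be the unique element with $\overline{S^{\chi_D}_{\lambda_C}}=V(x_\rho:\rho\in C)$. Then $$\{\mathbf 0\}=\bigcap_{\lambda\in\Lambda^D}\overline{S^{\chi_D}_\lambda}=\bigcap_{C\text{ primitive collection}}\overline{S^{\chi_D}_{\lambda_C}},$$ where $\mathbf 0$ is the origin of $\mathbf C^{\Sigma(1)}$.
   Context: $\Sigma$ complete fan with rays $\Sigma(1)$, generators $u_\rho$, divisors $D_\rho$; a primitive collection is $C\subset\Sigma(1)$ not contained in $\sigma(1)$ for any cone $\sigma$ while every proper subset is; $\mathbf C^{\Sigma(1)}=\mathrm{Spec}\,\mathbf C[x_\rho]$, $Z(\Sigma)=\bigcup_CV(x_\rho:\rho\in C)$. $\Gamma(G)=\{b\in\mathbf Z^{\Sigma(1)}:\sum b_\rho u_\rho=0\}$, $\langle\chi_D,b\rangle=\sum a_\rho b_\rho$ for $D=\sum a_\rho D_\rho$ (extended $\mathbf R$-linearly), $\Gamma(G)_{\mathbf R}\subset\mathbf R^{\Sigma(1)}$ with restricted standard norm. $\mathbf R$-ample divisors are elements of the ample cone in $\mathrm{Pic}(X_\Sigma)_{\mathbf R}$. For $x\in Z(\Sigma)$, $\sigma_x=\{v\in\Gamma(G)_{\mathbf R}:v_\rho\ge0\text{ whenever }x_\rho\ne0\}$; $v\mapsto\langle\chi_D,v\rangle/\|v\|$ attains its negative minimum $M^D(x)$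 on $\sigma_x\setminus\{0\}$ exactly on one ray, and $\lambda^D_x$ is the vector on it with $\|\lambda^D_x\|=-M^D(x)$. $\Lambda^D=\{\lambda^D_x:x\in Z(\Sigma)\}$, $S^{\chi_D}_\lambda=\{x\in Z(\Sigma):\lambda^D_x=\lambda\}$; for each primitive collection $C$ such a $\lambda_C$ exists and is unique. *)

theory Defs
  imports "HOL-Analysis.Analysis"
begin

text \<open>The rays \<Sigma>(1) are indexed by a finite type 'r (so \<Sigma>(1) = UNIV).
  The lattice N is the integer points of real^'n; u \<rho> is the primitive generator of \<rho>.
  A cone of the fan is recorded by its set of rays \<sigma>(1) \<subseteq> \<Sigma>(1); the cone itself is
  the convex cone spanned by the generators.\<close>

definition tcone :: "('r \<Rightarrow> real^'n) \<Rightarrow> 'r set \<Rightarrow> (real^'n) set" where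
  "tcone u S = convex_cone hull (u ` S)"

definition lattice_point :: "real^'n \<Rightarrow> bool" where
  "lattice_point v \<longleftrightarrow> (\<forall>i. v $ i \<in> \<int>)"

definition primitive_lattice_vector :: "real^'n \<Rightarrow> bool" where
  "primitive_lattice_vector v \<longleftrightarrow> lattice_point v \<and> v \<noteq> 0 \<and>
     (\<forall>t::real. 0 < t \<and> t < 1 \<longrightarrow> \<not> lattice_point (t *\<^sub>R v))"

definition complete_fan :: "('r::finite \<Rightarrow> real^'n) \<Rightarrow> 'r set set \<Rightarrow> bool" where
  "complete_fan u \<Sigma> \<longleftrightarrow>
     (\<forall>\<rho>. primitive_lattice_vector (u \<rho>)) \<and>
     (\<forall>\<rho>. {\<rho>} \<in> \<Sigma>) \<and>
     (\<forall>S\<in>\<Sigma>. tcone u S \<inter> uminus ` tcone u S = {0}) \<and>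
     (\<forall>S\<in>\<Sigma>. \<forall>\<rho>. u \<rho> \<in> tcone u S \<longrightarrow> \<rho> \<in> S) \<and>
     (\<forall>S\<in>\<Sigma>. \<forall>F. F face_of tcone u S \<longrightarrow> {\<rho>. u \<rho> \<in> F} \<in> \<Sigma>) \<and>
     (\<forall>S\<in>\<Sigma>. \<forall>T\<in>\<Sigma>. (tcone u S \<inter> tcone u T) face_of tcone u S) \<and>
     (\<Union>S\<in>\<Sigma>. tcone u S) = UNIV"

definition primitive_collection :: "'r set set \<Rightarrow> 'r set \<Rightarrow> bool" where
  "primitive_collection \<Sigma> C \<longleftrightarrow>
     (\<forall>S\<in>\<Sigma>. \<not> C \<subseteq> S) \<and> (\<forall>C'. C' \<subset> C \<longrightarrow> (\<exists>S\<in>\<Sigma>. C' \<subseteq> S))"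

definition max_cone :: "'r set set \<Rightarrow> 'r set \<Rightarrow> bool" where
  "max_cone \<Sigma> S \<longleftrightarrow> S \<in> \<Sigma> \<and> \<not> (\<exists>T\<in>\<Sigma>. S \<subset> T)"

text \<open>The torus-invariant \<real>-divisor D = \<Sum> a \<rho> D_\<rho> has class in the ample cone of
  Pic(X)_\<real>: it is \<real>-Cartier with strictly convex support function, i.e. on every
  maximal cone \<sigma> there is m_\<sigma> with \<langle>m_\<sigma>,u_\<rho>\<rangle> = -a_\<rho> for \<rho> \<in> \<sigma>(1) and > -a_\<rho> otherwise.\<close>
definition R_ample :: "('r \<Rightarrow> real^'n) \<Rightarrow> 'r set set \<Rightarrow> ('r \<Rightarrow> real) \<Rightarrow> bool" where
  "R_ample u \<Sigma> a \<longleftrightarrow> (\<forall>S. max_cone \<Sigma> S \<longrightarrow>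
     (\<exists>m::real^'n. (\<forall>\<rho>\<in>S. m \<bullet> u \<rho> = - a \<rho>) \<and> (\<forall>\<rho>. \<rho> \<notin> S \<longrightarrow> m \<bullet> u \<rho> > - a \<rho>)))"

text \<open>X_\<Sigma> projective: it carries an ample (integral, torus-invariant) divisor.\<close>
definition projective_fan :: "('r \<Rightarrow> real^'n) \<Rightarrow> 'r set set \<Rightarrow> bool" where
  "projective_fan u \<Sigma> \<longleftrightarrow> (\<exists>a. (\<forall>\<rho>. a \<rho> \<in> \<int>) \<and> R_ample u \<Sigma> a)"

definition Vcoord :: "'r::finite set \<Rightarrow> (complex^'r) set" where
  "Vcoord C = {x. \<forall>\<rho>\<in>C. x $ \<rho> = 0}"

definition Zset :: "'r::finite set set \<Rightarrow> (complex^'r) set" where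
  "Zset \<Sigma> = (\<Union>C\<in>{C. primitive_collection \<Sigma> C}. Vcoord C)"

definition GammaR :: "('r::finite \<Rightarrow> real^'n) \<Rightarrow> (real^'r) set" where
  "GammaR u = {b. (\<Sum>\<rho>\<in>UNIV. b $ \<rho> *\<^sub>R u \<rho>) = 0}"

definition chi_pair :: "('r::finite \<Rightarrow> real) \<Rightarrow> real^'r \<Rightarrow> real" where
  "chi_pair a b = (\<Sum>\<rho>\<in>UNIV. a \<rho> * b $ \<rho>)"

definition sigma_x :: "('r::finite \<Rightarrow> real^'n) \<Rightarrow> complex^'r \<Rightarrow> (real^'r) set" where
  "sigma_x u x = {v \<in> GammaR u. \<forall>\<rho>. x $ \<rho> \<noteq> 0 \<longrightarrow> v $ \<rho> \<ge> 0}"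

text \<open>\<lambda>^D_x: the vector on the unique minimizing ray of v \<mapsto> \<langle>\<chi>_D,v\<rangle>/\<parallel>v\<parallel> on \<sigma>_x - {0},
  with norm -M^D(x).\<close>
definition lambda_x :: "('r::finite \<Rightarrow> real^'n) \<Rightarrow> ('r \<Rightarrow> real) \<Rightarrow> complex^'r \<Rightarrow> real^'r" where
  "lambda_x u a x = (THE v. v \<in> sigma_x u x \<and> v \<noteq> 0 \<and>
      (\<forall>w\<in>sigma_x u x - {0}. chi_pair a v / norm v \<le> chi_pair a w / norm w) \<and>
      norm v = - (chi_pair a v / norm v))"

definition LambdaD :: "('r::finite \<Rightarrow> real^'n) \<Rightarrow> 'r set set \<Rightarrow> ('r \<Rightarrow> real) \<Rightarrow> (real^'r) set" where
  "LambdaD u \<Sigma> a = lambda_x u a ` Zset \<Sigma>"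

definition stratum :: "('r::finite \<Rightarrow> real^'n) \<Rightarrow> 'r set set \<Rightarrow> ('r \<Rightarrow> real) \<Rightarrow> real^'r \<Rightarrow> (complex^'r) set" where
  "stratum u \<Sigma> a l = {x \<in> Zset \<Sigma>. lambda_x u a x = l}"

definition lambda_C :: "('r::finite \<Rightarrow> real^'n) \<Rightarrow> 'r set set \<Rightarrow> ('r \<Rightarrow> real) \<Rightarrow> 'r set \<Rightarrow> real^'r" where
  "lambda_C u \<Sigma> a C = (THE l. l \<in> LambdaD u \<Sigma> a \<and> closure (stratum u \<Sigma> a l) = Vcoord C)"

end

theory Submission
  imports Defs
begin


lemma chi_add: "chi_pair a (v + w) = chi_pair a v + chi_pair a w"
  by (simp add: chi_pair_def sum.distrib distrib_left)

lemma chi_scale[simp]: "chi_pair a (c *\<^sub>R v) = c * chi_pair a v"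
  by (simp add: chi_pair_def sum_distrib_left algebra_simps)

lemma chi_neg[simp]: "chi_pair a (- v) = - chi_pair a v"
  by (simp add: chi_pair_def sum_negf)

lemma chi_cont: "continuous_on S (chi_pair a)"
  unfolding chi_pair_def by (intro continuous_intros)

lemma spec_unique:
  fixes K :: "(real^'r::finite) set"
  assumes add: "\<And>x y. x\<in>K \<Longrightarrow> y\<in>K \<Longrightarrow> x+y\<in>K"
  and P1: "v1 \<in> K \<and> v1 \<noteq> 0 \<and> (\<forall>w\<in>K-{0}. chi_pair a v1/norm v1 \<le> chi_pair a w/norm w) \<and> norm v1 = - (chi_pair a v1/norm v1)"
  and P2: "v2 \<in> K \<and> v2 \<noteq> 0 \<and> (\<forall>w\<in>K-{0}. chi_pair a v2/norm v2 \<le> chi_pair a w/norm w) \<and> norm v2 = - (chi_pair a v2/norm v2)"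
  shows "v1 = v2"
proof -
  define M where "M = chi_pair a v1/norm v1"
  have n1: "norm v1 > 0" "norm v2 > 0" using P1 P2 by auto
  have "M \<le> chi_pair a v2/norm v2" using P1 P2 M_def by auto
  moreover have "chi_pair a v2/norm v2 \<le> M" using P1 P2 M_def by auto
  ultimately have M2: "chi_pair a v2/norm v2 = M" by simp
  have nv1: "norm v1 = -M" and nv2: "norm v2 = -M" using P1 P2 M2 M_def by auto
  have Mneg: "M < 0" using n1 nv1 by simp
  have c1: "chi_pair a v1 = M * norm v1" using M_def n1 by simp
  have c2: "chi_pair a v2 = M * norm v2" using M2 n1 by (simp add: field_simps)
  have s: "v1 + v2 \<in> K" using add P1 P2 by blast
  have chis: "chi_pair a (v1+v2) = -2*M*M" using c1 c2 nv1 nv2 by (simp add: chi_add)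
  have "v1 + v2 \<noteq> 0"
  proof
    assume "v1 + v2 = 0"
    then have "chi_pair a (v1+v2) = 0" by (simp add: chi_pair_def)
    with chis Mneg show False by simp
  qed
  then have ns: "norm (v1+v2) > 0" by simp
  have "M \<le> chi_pair a (v1+v2) / norm (v1+v2)" using P1 s \<open>v1+v2\<noteq>0\<close> M_def by auto
  then have "M * norm (v1+v2) \<le> -2*M*M" using ns chis by (simp add: field_simps)
  then have "(-M) * (-2*M) \<le> (-M) * norm (v1+v2)" by (simp add: algebra_simps)
  moreover have "0 < -M" using Mneg by simp
  ultimately have "-2*M \<le> norm (v1+v2)" using mult_le_cancel_left_pos by blast
  moreover have "norm (v1+v2) \<le> norm v1 + norm v2" by (rule norm_triangle_ineq)
  ultimately have "norm (v1+v2) = norm v1 + norm v2" using nv1 nv2 by simp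
  then have "norm v1 *\<^sub>R v2 = norm v2 *\<^sub>R v1" by (simp add: norm_triangle_eq)
  then show ?thesis using nv1 nv2 Mneg by simp
qed

lemma spec_exists:
  fixes K :: "(real^'r::finite) set"
  assumes cl: "closed K" and sc: "\<And>x c. x\<in>K \<Longrightarrow> 0 \<le> c \<Longrightarrow> c *\<^sub>R x \<in> K"
  and w: "w \<in> K" "chi_pair a w < 0"
  shows "\<exists>v. v \<in> K \<and> v \<noteq> 0 \<and> (\<forall>w\<in>K-{0}. chi_pair a v/norm v \<le> chi_pair a w/norm w) \<and> norm v = - (chi_pair a v/norm v)"
proof -
  let ?S = "K \<inter> sphere 0 1"
  have "compact ?S" using cl by (simp add: compact_Int_closed closed_Int_compact)
  have w0: "w \<noteq> 0" using w by (auto simp: chi_pair_def)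
  have wS: "(1/norm w) *\<^sub>R w \<in> ?S" using w0 sc w by auto
  then have "?S \<noteq> {}" by blast
  then obtain e where e: "e \<in> ?S" "\<And>y. y \<in> ?S \<Longrightarrow> chi_pair a e \<le> chi_pair a y"
    using continuous_attains_inf[OF \<open>compact ?S\<close> _ chi_cont] by blast
  define M where "M = chi_pair a e"
  have "M \<le> chi_pair a ((1/norm w) *\<^sub>R w)" using e(2)[OF wS] M_def by simp
  also have "\<dots> < 0" using w w0 by (simp add: chi_scale divide_neg_pos)
  finally have Mneg: "M < 0" .
  have ne: "norm e = 1" using e by simp
  define v where "v = (-M) *\<^sub>R e"
  have vK: "v \<in> K" unfolding v_def using sc[of e "-M"] e Mneg by simp
  have nv: "norm v = -M" using ne Mneg v_def by simp
  have cv: "chi_pair a v / norm v = M" using nv Mneg v_def M_def by (simp add: chi_scale)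
  show ?thesis
  proof (intro exI conjI ballI)
    show "v \<in> K" by fact
    show "v \<noteq> 0" using nv Mneg by auto
    show "norm v = - (chi_pair a v / norm v)" using nv cv by simp
    fix y assume y: "y \<in> K - {0}"
    then have yS: "(1/norm y) *\<^sub>R y \<in> ?S" using sc by auto
    have "M \<le> chi_pair a ((1/norm y) *\<^sub>R y)" using e(2)[OF yS] M_def by simp
    then show "chi_pair a v / norm v \<le> chi_pair a y / norm y" using cv by (simp add: chi_scale)
  qed
qed



lemma tcone_rep:
  fixes u :: "'r::finite \<Rightarrow> real^'n"
  assumes "y \<in> tcone u S"
  shows "\<exists>c. (\<forall>\<tau>. 0 \<le> c \<tau>) \<and> (\<forall>\<tau>. \<tau> \<notin> S \<longrightarrow> c \<tau> = 0) \<and> y = (\<Sum>\<tau>\<in>UNIV. c \<tau> *\<^sub>R u \<tau>)"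
proof -
  define T where "T = {y. \<exists>c. (\<forall>\<tau>. 0 \<le> c \<tau>) \<and> (\<forall>\<tau>. \<tau> \<notin> S \<longrightarrow> c \<tau> = 0) \<and> y = (\<Sum>\<tau>\<in>UNIV. c \<tau> *\<^sub>R u \<tau>)}"
  have "convex_cone T"
    unfolding convex_cone_iff
  proof (intro conjI ballI allI impI)
    show "0 \<in> T" unfolding T_def by (rule CollectI, rule exI[of _ "\<lambda>_. 0"]) simp
  next
    fix x y assume "x \<in> T" "y \<in> T"
    then obtain c1 c2 where c1: "(\<forall>\<tau>. 0 \<le> c1 \<tau>) \<and> (\<forall>\<tau>. \<tau> \<notin> S \<longrightarrow> c1 \<tau> = 0) \<and> x = (\<Sum>\<tau>\<in>UNIV. c1 \<tau> *\<^sub>R u \<tau>)"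
      and c2: "(\<forall>\<tau>. 0 \<le> c2 \<tau>) \<and> (\<forall>\<tau>. \<tau> \<notin> S \<longrightarrow> c2 \<tau> = 0) \<and> y = (\<Sum>\<tau>\<in>UNIV. c2 \<tau> *\<^sub>R u \<tau>)"
      unfolding T_def by blast
    show "x + y \<in> T" unfolding T_def
      by (rule CollectI, rule exI[of _ "\<lambda>t. c1 t + c2 t"]) (use c1 c2 in \<open>auto simp: scaleR_add_left sum.distrib\<close>)
  next
    fix x and k :: real assume "x \<in> T" "0 \<le> k"
    then obtain c1 where c1: "(\<forall>\<tau>. 0 \<le> c1 \<tau>) \<and> (\<forall>\<tau>. \<tau> \<notin> S \<longrightarrow> c1 \<tau> = 0) \<and> x = (\<Sum>\<tau>\<in>UNIV. c1 \<tau> *\<^sub>R u \<tau>)"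
      unfolding T_def by blast
    show "k *\<^sub>R x \<in> T" unfolding T_def
      by (rule CollectI, rule exI[of _ "\<lambda>t. k * c1 t"]) (use c1 \<open>0 \<le> k\<close> in \<open>auto simp: scaleR_sum_right\<close>)
  qed
  moreover have "u ` S \<subseteq> T"
  proof
    fix y assume "y \<in> u ` S"
    then obtain \<rho> where \<rho>: "\<rho> \<in> S" "y = u \<rho>" by blast
    show "y \<in> T" unfolding T_def
      by (rule CollectI, rule exI[of _ "\<lambda>t. if t = \<rho> then 1 else 0"]) (use \<rho> in \<open>auto simp: if_distrib[of "\<lambda>c. c *\<^sub>R _"] cong: if_cong\<close>)
  qed
  ultimately have "tcone u S \<subseteq> T" unfolding tcone_def by (intro hull_minimal)
  then show ?thesis using assms T_def by blast
qed

lemma chi_decomp: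
  fixes u :: "'r::finite \<Rightarrow> real^'n"
  assumes "R_ample u \<Sigma> a" "max_cone \<Sigma> S"
  shows "\<exists>m. (\<forall>\<rho>\<in>S. m \<bullet> u \<rho> = - a \<rho>) \<and> (\<forall>\<rho>. \<rho> \<notin> S \<longrightarrow> m \<bullet> u \<rho> > - a \<rho>) \<and>
     (\<forall>v\<in>GammaR u. chi_pair a v = (\<Sum>\<rho>\<in>UNIV. (a \<rho> + m \<bullet> u \<rho>) * v$\<rho>))"
proof -
  obtain m where m: "(\<forall>\<rho>\<in>S. m \<bullet> u \<rho> = - a \<rho>)" "(\<forall>\<rho>. \<rho> \<notin> S \<longrightarrow> m \<bullet> u \<rho> > - a \<rho>)"
    using assms unfolding R_ample_def by blast
  have "chi_pair a v = (\<Sum>\<rho>\<in>UNIV. (a \<rho> + m \<bullet> u \<rho>) * v$\<rho>)" if "v \<in> GammaR u" for v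
  proof -
    have "(\<Sum>\<rho>\<in>UNIV. (m \<bullet> u \<rho>) * v$\<rho>) = m \<bullet> (\<Sum>\<rho>\<in>UNIV. v$\<rho> *\<^sub>R u \<rho>)"
      by (simp add: inner_sum_right mult.commute)
    also have "\<dots> = 0" using that by (simp add: GammaR_def)
    finally show ?thesis by (simp add: chi_pair_def distrib_right sum.distrib)
  qed
  then show ?thesis using m by blast
qed

lemma max_exists:
  fixes \<Sigma> :: "'r::finite set set"
  shows "S \<in> \<Sigma> \<Longrightarrow> \<exists>S'. max_cone \<Sigma> S' \<and> S \<subseteq> S'"
proof (induction "card (UNIV::'r set) - card S" arbitrary: S rule: less_induct)
  case less
  show ?case
  proof (cases "max_cone \<Sigma> S")
    case True then show ?thesis by blast
  next
    case False
    then obtain T where T: "T \<in> \<Sigma>" "S \<subset> T" using less.prems unfolding max_cone_def by blast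
    have "card S < card T" using T by (simp add: psubset_card_mono)
    moreover have "card T \<le> card (UNIV::'r set)" by (simp add: card_mono)
    ultimately have "card (UNIV::'r set) - card T < card (UNIV::'r set) - card S" by linarith
    then obtain S' where "max_cone \<Sigma> S'" "T \<subseteq> S'" using less.hyps T(1) by blast
    then show ?thesis using T by blast
  qed
qed

lemma prim_exists:
  fixes \<Sigma> :: "'r::finite set set"
  shows "\<forall>T\<in>\<Sigma>. \<not> D \<subseteq> T \<Longrightarrow> \<exists>C\<subseteq>D. primitive_collection \<Sigma> C"
proof (induction "card D" arbitrary: D rule: less_induct)
  case less
  show ?case
  proof (cases "\<forall>C'. C' \<subset> D \<longrightarrow> (\<exists>S\<in>\<Sigma>. C' \<subseteq> S)")
    case True then show ?thesis using less.prems unfolding primitive_collection_def by blast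
  next
    case False
    then obtain C' where C': "C' \<subset> D" "\<forall>T\<in>\<Sigma>. \<not> C' \<subseteq> T" by blast
    have "card C' < card D" using C' by (simp add: psubset_card_mono)
    then obtain C where "C \<subseteq> C'" "primitive_collection \<Sigma> C" using less.hyps C'(2) by blast
    then show ?thesis using C' by blast
  qed
qed

lemma tcone_mono: "S \<subseteq> T \<Longrightarrow> tcone u S \<subseteq> tcone u T"
  unfolding tcone_def by (intro hull_mono image_mono)

lemma ray_in_prim:
  fixes u :: "'r::finite \<Rightarrow> real^'n"
  assumes "complete_fan u \<Sigma>"
  shows "\<exists>C. primitive_collection \<Sigma> C \<and> \<rho> \<in> C"
proof -
  have cov: "(\<Union>S\<in>\<Sigma>. tcone u S) = UNIV" and pt: "\<forall>S\<in>\<Sigma>. tcone u S \<inter> uminus ` tcone u S = {0}"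
    and nz: "u \<rho> \<noteq> 0"
    using assms unfolding complete_fan_def primitive_lattice_vector_def by auto
  obtain S where S: "S \<in> \<Sigma>" "- u \<rho> \<in> tcone u S" using cov by blast
  have notin: "\<forall>T\<in>\<Sigma>. \<not> insert \<rho> S \<subseteq> T"
  proof (intro ballI notI)
    fix T assume T: "T \<in> \<Sigma>" "insert \<rho> S \<subseteq> T"
    have "u \<rho> \<in> tcone u T" unfolding tcone_def using T by (intro hull_inc) auto
    moreover have "- u \<rho> \<in> tcone u T" using S tcone_mono[of S T u] T by auto
    then have "u \<rho> \<in> uminus ` tcone u T" by (metis image_eqI minus_minus)
    ultimately have "u \<rho> \<in> tcone u T \<inter> uminus ` tcone u T" by blast
    then show False using pt T nz by auto
  qed
  obtain C where C: "C \<subseteq> insert \<rho> S" "primitive_collection \<Sigma> C" using prim_exists[OF notin] by blast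
  have "\<rho> \<in> C"
  proof (rule ccontr)
    assume "\<rho> \<notin> C"
    then have "C \<subseteq> S" using C by blast
    then show False using C(2) S(1) unfolding primitive_collection_def by blast
  qed
  then show ?thesis using C by blast
qed

lemma neg_dir:
  fixes u :: "'r::finite \<Rightarrow> real^'n"
  assumes "complete_fan u \<Sigma>" "R_ample u \<Sigma> a" "primitive_collection \<Sigma> C"
  shows "\<exists>w\<in>GammaR u. (\<forall>\<tau>. \<tau> \<notin> C \<longrightarrow> 0 \<le> w$\<tau>) \<and> chi_pair a w < 0"
proof -
  have cov: "(\<Union>S\<in>\<Sigma>. tcone u S) = UNIV" using assms unfolding complete_fan_def by auto
  obtain S where S: "S \<in> \<Sigma>" "(\<Sum>\<tau>\<in>C. u \<tau>) \<in> tcone u S" using cov by blast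
  obtain c where c: "\<forall>\<tau>. 0 \<le> c \<tau>" "\<forall>\<tau>. \<tau> \<notin> S \<longrightarrow> c \<tau> = 0"
     "(\<Sum>\<tau>\<in>C. u \<tau>) = (\<Sum>\<tau>\<in>UNIV. c \<tau> *\<^sub>R u \<tau>)"
    using tcone_rep[OF S(2)] by blast
  define w :: "real^'r" where "w = (\<chi> \<tau>. c \<tau> - (if \<tau> \<in> C then 1 else 0))"
  have "(\<Sum>\<tau>\<in>UNIV. w$\<tau> *\<^sub>R u \<tau>) = (\<Sum>\<tau>\<in>UNIV. c \<tau> *\<^sub>R u \<tau>) - (\<Sum>\<tau>\<in>UNIV. (if \<tau> \<in> C then u \<tau> else 0))"
    unfolding w_def by (simp add: scaleR_diff_left sum_subtractf if_distrib[of "\<lambda>c. c *\<^sub>R _"] cong: if_cong)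
  also have "\<dots> = 0" using c(3) by (simp add: sum.If_cases)
  finally have wG: "w \<in> GammaR u" unfolding GammaR_def by simp
  have wpos: "\<forall>\<tau>. \<tau> \<notin> C \<longrightarrow> 0 \<le> w$\<tau>" unfolding w_def using c(1) by simp
  obtain S' where S': "max_cone \<Sigma> S'" "S \<subseteq> S'" using max_exists S(1) by blast
  obtain m where m: "(\<forall>\<rho>\<in>S'. m \<bullet> u \<rho> = - a \<rho>)" "(\<forall>\<rho>. \<rho> \<notin> S' \<longrightarrow> m \<bullet> u \<rho> > - a \<rho>)"
     "(\<forall>v\<in>GammaR u. chi_pair a v = (\<Sum>\<rho>\<in>UNIV. (a \<rho> + m \<bullet> u \<rho>) * v$\<rho>))"
    using chi_decomp[OF assms(2) S'(1)] by blast
  have "S' \<in> \<Sigma>" using S' unfolding max_cone_def by blast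
  then obtain \<tau>0 where t0: "\<tau>0 \<in> C" "\<tau>0 \<notin> S'" using assms(3) unfolding primitive_collection_def by blast
  have "(\<Sum>\<rho>\<in>UNIV. (a \<rho> + m \<bullet> u \<rho>) * w$\<rho>) < (\<Sum>\<rho>\<in>(UNIV::'r set). 0)"
  proof (rule sum_strict_mono_ex1[of UNIV "\<lambda>\<rho>. (a \<rho> + m \<bullet> u \<rho>) * w$\<rho>" "\<lambda>_. 0"])
    show "\<forall>x\<in>UNIV. (a x + m \<bullet> u x) * w $ x \<le> 0"
    proof
      fix x :: 'r
      show "(a x + m \<bullet> u x) * w $ x \<le> 0"
      proof (cases "x \<in> S'")
        case True then show ?thesis using m(1) by simp
      next
        case False
        then have "c x = 0" using c(2) S'(2) by blast
        then have "w$x \<le> 0" unfolding w_def by simp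
        moreover have "a x + m \<bullet> u x > 0" using m(2) False by force
        ultimately show ?thesis by (simp add: mult_nonneg_nonpos)
      qed
    qed
    have "c \<tau>0 = 0" using c(2) S'(2) t0 by blast
    then have "w$\<tau>0 = -1" unfolding w_def using t0 by simp
    moreover have "a \<tau>0 + m \<bullet> u \<tau>0 > 0" using m(2) t0 by force
    ultimately have "(a \<tau>0 + m \<bullet> u \<tau>0) * w $ \<tau>0 < 0" by simp
    then show "\<exists>x\<in>UNIV. (a x + m \<bullet> u x) * w $ x < 0" by blast
  qed simp
  then have "chi_pair a w < 0" using m(3) wG by simp
  then show ?thesis using wG wpos by blast
qed



abbreviation spec where
  "spec a K v \<equiv> v \<in> K \<and> v \<noteq> 0 \<and> (\<forall>w\<in>K-{0}. chi_pair a v/norm v \<le> chi_pair a w/norm w) \<and> norm v = - (chi_pair a v/norm v)"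

lemma closed_sigma: "closed (sigma_x u x)"
proof -
  have "sigma_x u x = {b. (\<Sum>\<rho>\<in>UNIV. b $ \<rho> *\<^sub>R u \<rho>) = 0} \<inter> (\<Inter>\<tau>\<in>{\<tau>. x$\<tau> \<noteq> 0}. {v. 0 \<le> v$\<tau>})"
    unfolding sigma_x_def GammaR_def by auto
  moreover have c1: "closed {b::real^'a. (\<Sum>\<rho>\<in>UNIV. b $ \<rho> *\<^sub>R u \<rho>) = 0}"
    by (intro closed_Collect_eq continuous_intros)
  moreover have c2: "closed {v::real^'a. 0 \<le> v$\<tau>}" for \<tau>
    by (intro closed_Collect_le continuous_intros)
  ultimately show ?thesis by (simp only:) (intro closed_Int c1 closed_INT ballI c2)
qed

lemma sigma_add: "v \<in> sigma_x u x \<Longrightarrow> w \<in> sigma_x u x \<Longrightarrow> v + w \<in> sigma_x u x"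
proof -
  assume v: "v \<in> sigma_x u x" and w: "w \<in> sigma_x u x"
  have "(\<Sum>\<rho>\<in>UNIV. (v + w) $ \<rho> *\<^sub>R u \<rho>) = (\<Sum>\<rho>\<in>UNIV. v $ \<rho> *\<^sub>R u \<rho>) + (\<Sum>\<rho>\<in>UNIV. w $ \<rho> *\<^sub>R u \<rho>)"
    by (simp add: scaleR_add_left sum.distrib)
  then show ?thesis using v w unfolding sigma_x_def GammaR_def by simp
qed

lemma sigma_scale: "v \<in> sigma_x u x \<Longrightarrow> 0 \<le> c \<Longrightarrow> c *\<^sub>R v \<in> sigma_x u x"
proof -
  assume v: "v \<in> sigma_x u x" and c: "0 \<le> c"
  have "(\<Sum>\<rho>\<in>UNIV. (c *\<^sub>R v) $ \<rho> *\<^sub>R u \<rho>) = c *\<^sub>R (\<Sum>\<rho>\<in>UNIV. v $ \<rho> *\<^sub>R u \<rho>)"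
    by (simp add: scaleR_sum_right)
  then show ?thesis using v c unfolding sigma_x_def GammaR_def by simp
qed

lemma lambda_supp: "(\<And>\<tau>. x$\<tau> = 0 \<longleftrightarrow> y$\<tau> = 0) \<Longrightarrow> lambda_x u a x = lambda_x u a y"
proof -
  assume "\<And>\<tau>. x$\<tau> = 0 \<longleftrightarrow> y$\<tau> = 0"
  then have "sigma_x u x = sigma_x u y" unfolding sigma_x_def by auto
  then show ?thesis unfolding lambda_x_def by simp
qed

lemma spec_Z:
  fixes u :: "'r::finite \<Rightarrow> real^'n"
  assumes "complete_fan u \<Sigma>" "R_ample u \<Sigma> a" "x \<in> Zset \<Sigma>"
  shows "spec a (sigma_x u x) (lambda_x u a x)"
proof -
  obtain C where C: "primitive_collection \<Sigma> C" "x \<in> Vcoord C" using assms(3) unfolding Zset_def by blast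
  obtain w where w: "w \<in> GammaR u" "\<forall>\<tau>. \<tau> \<notin> C \<longrightarrow> 0 \<le> w$\<tau>" "chi_pair a w < 0"
    using neg_dir[OF assms(1,2) C(1)] by blast
  have "w \<in> sigma_x u x" using w C(2) unfolding sigma_x_def Vcoord_def by auto
  have ex: "\<exists>!v. spec a (sigma_x u x) v"
  proof (rule ex_ex1I)
    show "\<exists>v. spec a (sigma_x u x) v"
      by (rule spec_exists[OF closed_sigma sigma_scale \<open>w \<in> sigma_x u x\<close> w(3)])
  next
    fix v1 v2 assume "spec a (sigma_x u x) v1" "spec a (sigma_x u x) v2"
    then show "v1 = v2" using spec_unique[of "sigma_x u x" v1 a v2] sigma_add by blast
  qed
  show ?thesis unfolding lambda_x_def by (rule theI'[OF ex])
qed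

definition xgen :: "'r::finite set \<Rightarrow> complex^'r" where
  "xgen C = (\<chi> \<tau>. if \<tau> \<in> C then 0 else 1)"

lemma xgen_Z: "primitive_collection \<Sigma> C \<Longrightarrow> xgen C \<in> Zset \<Sigma>"
  unfolding Zset_def Vcoord_def xgen_def by auto

lemma lam_neg:
  fixes u :: "'r::finite \<Rightarrow> real^'n"
  assumes "complete_fan u \<Sigma>" "R_ample u \<Sigma> a" "primitive_collection \<Sigma> C" "\<rho> \<in> C"
  shows "(lambda_x u a (xgen C))$\<rho> < 0"
proof (rule ccontr)
  let ?l = "lambda_x u a (xgen C)"
  assume "\<not> ?l$\<rho> < 0"
  then have r: "0 \<le> ?l$\<rho>" by simp
  have sp: "spec a (sigma_x u (xgen C)) ?l" using spec_Z[OF assms(1,2) xgen_Z[OF assms(3)]] .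
  have n: "norm ?l > 0" using sp by simp
  have "chi_pair a ?l / norm ?l < 0" using sp n by linarith
  then have chineg: "chi_pair a ?l < 0" using n by (simp add: divide_less_0_iff)
  have "C - {\<rho>} \<subset> C" using assms(4) by blast
  then obtain S where S: "S \<in> \<Sigma>" "C - {\<rho>} \<subseteq> S" using assms(3) unfolding primitive_collection_def by blast
  obtain S' where S': "max_cone \<Sigma> S'" "S \<subseteq> S'" using max_exists S(1) by blast
  obtain m where m: "(\<forall>\<rho>\<in>S'. m \<bullet> u \<rho> = - a \<rho>)" "(\<forall>\<rho>. \<rho> \<notin> S' \<longrightarrow> m \<bullet> u \<rho> > - a \<rho>)"
     "(\<forall>v\<in>GammaR u. chi_pair a v = (\<Sum>\<rho>\<in>UNIV. (a \<rho> + m \<bullet> u \<rho>) * v$\<rho>))"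
    using chi_decomp[OF assms(2) S'(1)] by blast
  have lG: "?l \<in> GammaR u" and lpos: "\<forall>\<tau>. \<tau> \<notin> C \<longrightarrow> 0 \<le> ?l$\<tau>"
    using sp unfolding sigma_x_def xgen_def by auto
  have "0 \<le> (\<Sum>\<tau>\<in>UNIV. (a \<tau> + m \<bullet> u \<tau>) * ?l$\<tau>)"
  proof (rule sum_nonneg)
    fix x :: 'r
    show "0 \<le> (a x + m \<bullet> u x) * ?l$x"
    proof (cases "x \<in> S'")
      case True then show ?thesis using m(1) by simp
    next
      case False
      then have "0 \<le> ?l$x" using lpos r S S' by (cases "x = \<rho>") auto
      moreover have "a x + m \<bullet> u x > 0" using m(2) False by force
      ultimately show ?thesis by simp
    qed
  qed
  then have "0 \<le> chi_pair a ?l" using m(3) lG by simp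
  then show False using chineg by simp
qed

lemma stratum_zero:
  fixes u :: "'r::finite \<Rightarrow> real^'n"
  assumes "complete_fan u \<Sigma>" "R_ample u \<Sigma> a" "x \<in> stratum u \<Sigma> a l" "l$\<tau> < 0"
  shows "x$\<tau> = 0"
proof -
  have "x \<in> Zset \<Sigma>" "lambda_x u a x = l" using assms(3) unfolding stratum_def by auto
  then have "l \<in> sigma_x u x" using spec_Z[OF assms(1,2)] by metis
  then show ?thesis using assms(4) unfolding sigma_x_def by force
qed

lemma closed_Vcoord: "closed (Vcoord C)"
proof -
  have "Vcoord C = (\<Inter>\<tau>\<in>C. {x. x$\<tau> = 0})" unfolding Vcoord_def by auto
  moreover have "closed {x::complex^'a. x$\<tau> = 0}" for \<tau>
    by (intro closed_Collect_eq continuous_intros)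
  ultimately show ?thesis by (simp only:) (intro closed_INT ballI)
qed



lemma xgen_zero: "(xgen C)$\<tau> = 0 \<longleftrightarrow> \<tau> \<in> C"
  unfolding xgen_def by simp

lemma Vcoord_Z: "primitive_collection \<Sigma> C \<Longrightarrow> Vcoord C \<subseteq> Zset \<Sigma>"
  unfolding Zset_def by blast

lemma closure_strat:
  fixes u :: "'r::finite \<Rightarrow> real^'n"
  assumes fan: "complete_fan u \<Sigma>" and amp: "R_ample u \<Sigma> a" and C: "primitive_collection \<Sigma> C"
  shows "closure (stratum u \<Sigma> a (lambda_x u a (xgen C))) = Vcoord C"
proof
  let ?l = "lambda_x u a (xgen C)"
  have "stratum u \<Sigma> a ?l \<subseteq> Vcoord C"
  proof
    fix x assume x: "x \<in> stratum u \<Sigma> a ?l"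
    show "x \<in> Vcoord C" unfolding Vcoord_def
      using stratum_zero[OF fan amp x lam_neg[OF fan amp C]] by blast
  qed
  then show "closure (stratum u \<Sigma> a ?l) \<subseteq> Vcoord C"
    using closed_Vcoord by (rule closure_minimal)
next
  let ?l = "lambda_x u a (xgen C)"
  show "Vcoord C \<subseteq> closure (stratum u \<Sigma> a ?l)"
  proof
    fix y assume y: "y \<in> Vcoord C"
    define d :: "complex^'r" where "d = (\<chi> \<tau>. if \<tau> \<notin> C \<and> y$\<tau> = 0 then 1 else 0)"
    show "y \<in> closure (stratum u \<Sigma> a ?l)"
      unfolding closure_approachable
    proof (intro allI impI)
      fix e :: real assume e: "e > 0"
      define t where "t = e / (norm d + 1)"
      have np: "0 < norm d + 1" using norm_ge_zero[of d] by linarith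
      have t: "t > 0" using e np t_def by (simp add: divide_pos_pos)
      define z where "z = y + t *\<^sub>R d"
      have zc: "z$\<tau> = y$\<tau> + t *\<^sub>R d$\<tau>" for \<tau> unfolding z_def by simp
      have zV: "z \<in> Vcoord C" using y by (auto simp: Vcoord_def zc d_def)
      have supp: "z$\<tau> = 0 \<longleftrightarrow> (xgen C)$\<tau> = 0" for \<tau>
        using y t by (auto simp: xgen_zero zc d_def Vcoord_def)
      have "z \<in> stratum u \<Sigma> a ?l"
        unfolding stratum_def using Vcoord_Z[OF C] zV lambda_supp[OF supp] by auto
      moreover have "dist z y < e"
      proof -
        have "dist z y = t * norm d" unfolding z_def dist_norm using t by simp
        also have "\<dots> < t * (norm d + 1)" using t by simp
        also have "\<dots> = e" using np unfolding t_def by simp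
        finally show ?thesis .
      qed
      ultimately show "\<exists>z\<in>stratum u \<Sigma> a ?l. dist z y < e" by blast
    qed
  qed
qed

lemma lambda_C_eq:
  fixes u :: "'r::finite \<Rightarrow> real^'n"
  assumes fan: "complete_fan u \<Sigma>" and amp: "R_ample u \<Sigma> a" and C: "primitive_collection \<Sigma> C"
  shows "lambda_C u \<Sigma> a C = lambda_x u a (xgen C)"
  unfolding lambda_C_def
proof (rule the_equality)
  let ?l = "lambda_x u a (xgen C)"
  show "?l \<in> LambdaD u \<Sigma> a \<and> closure (stratum u \<Sigma> a ?l) = Vcoord C"
    using closure_strat[OF fan amp C] xgen_Z[OF C] unfolding LambdaD_def by blast
  fix l assume l: "l \<in> LambdaD u \<Sigma> a \<and> closure (stratum u \<Sigma> a l) = Vcoord C"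
  have "xgen C \<in> Vcoord C" unfolding Vcoord_def using xgen_zero by blast
  then have "xgen C \<in> closure (stratum u \<Sigma> a l)" using l by simp
  then have "\<forall>e>0. \<exists>z\<in>stratum u \<Sigma> a l. dist z (xgen C) < e" unfolding closure_approachable .
  then obtain z where z: "z \<in> stratum u \<Sigma> a l" "dist z (xgen C) < 1/2"
    by (metis half_gt_zero zero_less_one)
  have zV: "z \<in> Vcoord C" using z(1) l closure_subset by blast
  have supp: "z$\<tau> = 0 \<longleftrightarrow> (xgen C)$\<tau> = 0" for \<tau>
  proof (cases "\<tau> \<in> C")
    case True then show ?thesis using zV unfolding Vcoord_def xgen_zero by simp
  next
    case False
    have "norm ((z - xgen C)$\<tau>) \<le> norm (z - xgen C)" by (rule Finite_Cartesian_Product.norm_nth_le)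
    also have "\<dots> < 1/2" using z(2) by (simp add: dist_norm)
    finally have "norm (z$\<tau> - 1) < 1/2" using False unfolding xgen_def by simp
    then have "z$\<tau> \<noteq> 0" by auto
    then show ?thesis using False xgen_zero by metis
  qed
  have "l = lambda_x u a z" using z(1) unfolding stratum_def by simp
  also have "\<dots> = ?l" by (rule lambda_supp[OF supp])
  finally show "l = ?l" .
qed

lemma zero_closure:
  fixes u :: "'r::finite \<Rightarrow> real^'n"
  assumes "l \<in> LambdaD u \<Sigma> a"
  shows "0 \<in> closure (stratum u \<Sigma> a l)"
proof -
  obtain x C where x: "x \<in> Vcoord C" "primitive_collection \<Sigma> C" "l = lambda_x u a x"
    using assms unfolding LambdaD_def Zset_def by blast
  show ?thesis unfolding closure_approachable
  proof (intro allI impI)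
    fix e :: real assume e: "e > 0"
    define t where "t = e / (norm x + 1)"
    have np: "0 < norm x + 1" using norm_ge_zero[of x] by linarith
    have t: "t > 0" using e np t_def by (simp add: divide_pos_pos)
    define z where "z = t *\<^sub>R x"
    have supp: "z$\<tau> = 0 \<longleftrightarrow> x$\<tau> = 0" for \<tau> unfolding z_def using t by simp
    have zV: "z \<in> Vcoord C" using x(1) unfolding Vcoord_def z_def by simp
    have "z \<in> stratum u \<Sigma> a l"
      unfolding stratum_def using Vcoord_Z[OF x(2)] zV lambda_supp[OF supp] x(3) by auto
    moreover have "dist z 0 < e"
    proof -
      have "dist z 0 = t * norm x" unfolding z_def using t by simp
      also have "\<dots> < t * (norm x + 1)" using t by simp
      also have "\<dots> = e" using np unfolding t_def by simp
      finally show ?thesis .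
    qed
    ultimately show "\<exists>z\<in>stratum u \<Sigma> a l. dist z 0 < e" by blast
  qed
qed

theorem corollary5p33:
  fixes u :: "'r::finite \<Rightarrow> real^'n" and \<Sigma> :: "'r set set" and a :: "'r \<Rightarrow> real"
  assumes "complete_fan u \<Sigma>" and "projective_fan u \<Sigma>" and "R_ample u \<Sigma> a"
  shows "{0} = (\<Inter>l\<in>LambdaD u \<Sigma> a. closure (stratum u \<Sigma> a l))
       \<and> (\<Inter>l\<in>LambdaD u \<Sigma> a. closure (stratum u \<Sigma> a l))
         = (\<Inter>C\<in>{C. primitive_collection \<Sigma> C}. closure (stratum u \<Sigma> a (lambda_C u \<Sigma> a C)))"
proof -
  let ?I = "\<Inter>l\<in>LambdaD u \<Sigma> a. closure (stratum u \<Sigma> a l)"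
  let ?J = "\<Inter>C\<in>{C. primitive_collection \<Sigma> C}. closure (stratum u \<Sigma> a (lambda_C u \<Sigma> a C))"
  have h1: "lambda_C u \<Sigma> a C \<in> LambdaD u \<Sigma> a \<and> closure (stratum u \<Sigma> a (lambda_C u \<Sigma> a C)) = Vcoord C"
    if "primitive_collection \<Sigma> C" for C
  proof -
    have e: "lambda_C u \<Sigma> a C = lambda_x u a (xgen C)" by (rule lambda_C_eq[OF assms(1,3) that])
    have "lambda_x u a (xgen C) \<in> LambdaD u \<Sigma> a" unfolding LambdaD_def by (rule imageI[OF xgen_Z[OF that]])
    then show ?thesis unfolding e using closure_strat[OF assms(1,3) that] by (rule conjI)
  qed
  have J: "?J = (\<Inter>C\<in>{C. primitive_collection \<Sigma> C}. Vcoord C)"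
    by (rule INF_cong[OF refl]) (use h1 in blast)
  have V: "(\<Inter>C\<in>{C. primitive_collection \<Sigma> C}. Vcoord C) = {0}"
  proof
    show "{0} \<subseteq> (\<Inter>C\<in>{C. primitive_collection \<Sigma> C}. Vcoord C)" unfolding Vcoord_def by auto
    show "(\<Inter>C\<in>{C. primitive_collection \<Sigma> C}. Vcoord C) \<subseteq> {0}"
    proof
      fix y assume y: "y \<in> (\<Inter>C\<in>{C. primitive_collection \<Sigma> C}. Vcoord C)"
      have "y$\<rho> = 0" for \<rho>
      proof -
        obtain C where "primitive_collection \<Sigma> C" "\<rho> \<in> C" using ray_in_prim[OF assms(1)] by blast
        then show ?thesis using y unfolding Vcoord_def by blast
      qed
      then have "y = 0" by (simp add: vec_eq_iff)
      then show "y \<in> {0}" by simp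
    qed
  qed
  have I0: "{0} \<subseteq> ?I"
  proof
    fix y :: "complex^'r" assume "y \<in> {0}"
    then show "y \<in> ?I" using zero_closure[of _ u \<Sigma> a] by simp
  qed
  have IJ: "?I \<subseteq> ?J"
  proof
    fix y assume y: "y \<in> ?I"
    show "y \<in> ?J"
    proof (rule INT_I)
      fix C assume "C \<in> {C. primitive_collection \<Sigma> C}"
      then have "lambda_C u \<Sigma> a C \<in> LambdaD u \<Sigma> a" using h1 by simp
      then show "y \<in> closure (stratum u \<Sigma> a (lambda_C u \<Sigma> a C))" by (rule INT_D[OF y])
    qed
  qed
  have J0: "?J = {0}" using J V by (rule trans)
  have "?I = {0}" using I0 IJ J0 by (rule_tac equalityI) simp_all
  then show ?thesis using J0 by simp
qed

end
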